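(* Let $g\ge 1$ be an integer and let $A=\{a_1<\cdots<a_m\}\subset\mathbb N$ be a $\mathcal D[g]$ set. Then $$a_m\ \ge\ \frac1g\binom{m}{\lfloor m/2\rfloor}-1,$$ and hence $\binom{m}{\lfloor m/2\rfloor}\le g(a_m+1)$.
   Context: For a positive integer $g$, a set $\mathcal S=\{a_1<a_2<\cdots\}\subset\mathbb N$ (finite or infinite) is a $\mathcal D[g]$ set if for every $m$ (for which $a_m$ exists) and every $t\in\mathbb Z$, $$\left|\left\{I\subseteq\{1,\dots,m\}:\ \sum_{i\in I}a_i=t\right\}\right|\le g.$$ *)

theory Defs
  imports Complex_Main
begin

text \<open>A finite set {a_1 < ... < a_m} of positive integers is encoded by the sequence
  a :: nat => nat restricted to indices 1..m, strictly increasing there.\<close>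

definition D_set :: "nat \<Rightarrow> (nat \<Rightarrow> nat) \<Rightarrow> nat \<Rightarrow> bool" where
  "D_set g a m \<longleftrightarrow>
     (\<forall>k\<in>{1..m}. \<forall>t::int.
        card {I. I \<subseteq> {1..k} \<and> (\<Sum>i\<in>I. int (a i)) = t} \<le> g)"

end

theory Submission
  imports Defs
begin

definition ssum :: "(nat \<Rightarrow> nat) \<Rightarrow> nat set \<Rightarrow> int" where
  "ssum a I = (\<Sum>i\<in>I. int (a i))"

definition win :: "(nat \<Rightarrow> nat) \<Rightarrow> nat \<Rightarrow> int \<Rightarrow> int \<Rightarrow> nat set set" where
  "win a n lo hi = {I. I \<subseteq> {1..n} \<and> lo < 2 * ssum a I - ssum a {1..n} \<and> 2 * ssum a I - ssum a {1..n} \<le> hi}"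

definition cnt :: "(nat \<Rightarrow> nat) \<Rightarrow> nat \<Rightarrow> nat \<Rightarrow> nat \<Rightarrow> nat" where
  "cnt a n M r = card (win a n (- (int r * int M)) (int r * int M))"

lemma win_finite: "finite (win a n lo hi)"
  by (rule finite_subset[of _ "Pow {1..n}"]) (auto simp: win_def)

lemma cnt_rec:
  assumes "a (Suc n) = M"
  shows "cnt a (Suc n) M (Suc r) = cnt a n M (Suc (Suc r)) + cnt a n M r"
proof -
  let ?v = "\<lambda>I. 2 * ssum a I - ssum a {1..n}"
  define A where "A = win a n (-(int r * M)) ((int r + 2) * M)"
  define B where "B = win a n (-((int r + 2) * M)) (int r * M)"
  have hS: "ssum a {1..Suc n} = ssum a {1..n} + int M"
  proof -
    have "{1..Suc n} = insert (Suc n) {1..n}" by auto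
    then show ?thesis using assms by (simp add: ssum_def)
  qed
  have hins: "ssum a (insert (Suc n) J) = int M + ssum a J" if "J \<subseteq> {1..n}" for J
  proof -
    have "finite J" using that finite_subset by blast
    moreover have "Suc n \<notin> J" using that by auto
    ultimately show ?thesis using assms by (simp add: ssum_def)
  qed
  have eq: "win a (Suc n) (- (int (Suc r) * int M)) (int (Suc r) * int M) = A \<union> insert (Suc n) ` B"
  proof (rule set_eqI, rule iffI)
    fix I assume I: "I \<in> win a (Suc n) (- (int (Suc r) * int M)) (int (Suc r) * int M)"
    hence sub: "I \<subseteq> {1..Suc n}" and c1: "- (int (Suc r) * int M) < 2 * ssum a I - ssum a {1..Suc n}"
      and c2: "2 * ssum a I - ssum a {1..Suc n} \<le> int (Suc r) * int M" by (auto simp: win_def)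
    show "I \<in> A \<union> insert (Suc n) ` B"
    proof (cases "Suc n \<in> I")
      case False
      hence "I \<subseteq> {1..n}" using sub by (auto simp: le_Suc_eq)
      thus ?thesis using c1 c2 hS by (auto simp: A_def win_def algebra_simps)
    next
      case True
      define J where "J = I - {Suc n}"
      have J: "J \<subseteq> {1..n}" using sub by (auto simp: J_def le_Suc_eq)
      have IJ: "I = insert (Suc n) J" using True by (auto simp: J_def)
      have "J \<in> B" using c1 c2 hS hins[OF J] J unfolding IJ by (auto simp: B_def win_def algebra_simps)
      thus ?thesis using IJ by blast
    qed
  next
    fix I assume "I \<in> A \<union> insert (Suc n) ` B"
    thus "I \<in> win a (Suc n) (- (int (Suc r) * int M)) (int (Suc r) * int M)"
    proof
      assume "I \<in> A"
      thus ?thesis using hS by (auto simp: A_def win_def algebra_simps)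
    next
      assume "I \<in> insert (Suc n) ` B"
      then obtain J where J: "J \<in> B" and IJ: "I = insert (Suc n) J" by blast
      have Js: "J \<subseteq> {1..n}" using J by (auto simp: B_def win_def)
      show ?thesis using J hS hins[OF Js] Js unfolding IJ by (auto simp: B_def win_def algebra_simps)
    qed
  qed
  have disj: "A \<inter> insert (Suc n) ` B = {}" by (auto simp: A_def win_def)
  have inj: "inj_on (insert (Suc n)) B"
  proof (rule inj_onI)
    fix x y assume "x \<in> B" "y \<in> B" "insert (Suc n) x = insert (Suc n) y"
    moreover have "Suc n \<notin> x" "Suc n \<notin> y" using \<open>x \<in> B\<close> \<open>y \<in> B\<close> by (auto simp: B_def win_def)
    ultimately show "x = y" using insert_ident by metis
  qed
  have fA: "finite A" and fB: "finite B" by (auto simp: A_def B_def win_finite)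
  have "cnt a (Suc n) M (Suc r) = card A + card B"
    unfolding cnt_def eq using disj inj fA fB by (simp add: card_Un_disjoint card_image)
  also have "\<dots> = card (A \<union> B) + card (A \<inter> B)" using fA fB card_Un_Int by blast
  also have "A \<union> B = win a n (- (int (Suc (Suc r)) * int M)) (int (Suc (Suc r)) * int M)"
  proof -
    have nn: "0 \<le> int M * int r" by simp
    show ?thesis unfolding A_def B_def win_def
      apply (auto simp: algebra_simps)
      using nn by linarith
  qed
  also have "A \<inter> B = win a n (- (int r * int M)) (int r * int M)"
    by (auto simp: A_def B_def win_def algebra_simps)
  finally show ?thesis by (simp add: cnt_def)
qed

lemma cnt_mono:
  assumes "M' \<le> M" shows "cnt a n M' r \<le> cnt a n M r"
proof -
  have h: "int r * int M' \<le> int r * int M" using assms by (simp add: mult_left_mono)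
  show ?thesis unfolding cnt_def
    by (rule card_mono[OF win_finite]) (use h in \<open>auto simp: win_def\<close>)
qed

lemma cnt_zero: "cnt a n M 0 = 0"
  by (simp add: cnt_def win_def)

lemma cnt_base:
  assumes "0 < M" shows "cnt a 0 M (Suc r) = 1"
proof -
  have "win a 0 (- (int (Suc r) * int M)) (int (Suc r) * int M) = {{}}"
    using assms by (auto simp: win_def ssum_def)
  thus ?thesis by (simp add: cnt_def)
qed

lemma cnt_main:
  assumes mono: "\<forall>i. 1 \<le> i \<longrightarrow> Suc i \<le> N \<longrightarrow> a i \<le> a (Suc i)"
    and pos: "\<forall>i\<in>{1..N}. 0 < a i"
  shows "n \<le> N \<Longrightarrow> 0 < M \<Longrightarrow> (1 \<le> n \<longrightarrow> a n \<le> M) \<Longrightarrow> cnt (\<lambda>_. 1) n 1 r \<le> cnt a n M r"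
proof (induction n arbitrary: M r)
  case 0
  then show ?case by (cases r) (simp_all add: cnt_zero cnt_base)
next
  case (Suc n)
  show ?case
  proof (cases r)
    case 0
    then show ?thesis by (simp add: cnt_zero)
  next
    case (Suc r')
    define A where "A = a (Suc n)"
    have A0: "0 < A" using pos Suc.prems(1) by (auto simp: A_def)
    have AM: "A \<le> M" using Suc.prems(3) by (simp add: A_def)
    have IH1: "cnt (\<lambda>_. 1) n 1 q \<le> cnt a n A q" for q
    proof (rule Suc.IH)
      show "n \<le> N" using Suc.prems(1) by simp
      show "0 < A" by (rule A0)
      show "1 \<le> n \<longrightarrow> a n \<le> A" using mono Suc.prems(1) by (simp add: A_def)
    qed
    have "cnt (\<lambda>_. 1) (Suc n) 1 r = cnt (\<lambda>_. 1) n 1 (Suc (Suc r')) + cnt (\<lambda>_. 1) n 1 r'"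
      unfolding Suc by (rule cnt_rec) simp
    also have "\<dots> \<le> cnt a n A (Suc (Suc r')) + cnt a n A r'"
      using IH1 by (simp add: add_mono)
    also have "\<dots> = cnt a (Suc n) A r"
      unfolding Suc by (rule cnt_rec[symmetric]) (simp add: A_def)
    also have "\<dots> \<le> cnt a (Suc n) M r" using AM by (rule cnt_mono)
    finally show ?thesis .
  qed
qed

lemma cnt_ones: "cnt (\<lambda>_. 1) n 1 1 = n choose (n div 2)"
proof -
  have ss: "ssum (\<lambda>_. 1) I = int (card I)" for I by (simp add: ssum_def)
  have "win (\<lambda>_. 1) n (- (int 1 * int 1)) (int 1 * int 1) = {I. I \<subseteq> {1..n} \<and> card I = (n + 1) div 2}"
    unfolding win_def ss by auto
  hence "cnt (\<lambda>_. 1) n 1 1 = n choose ((n + 1) div 2)"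
    by (simp add: cnt_def n_subsets)
  also have "\<dots> = n choose (n - (n + 1) div 2)" by (rule binomial_symmetric) simp
  also have "n - (n + 1) div 2 = n div 2" by simp
  finally show ?thesis .
qed

lemma cnt_bound:
  assumes D: "D_set g a m" and m1: "1 \<le> m"
  shows "cnt a m (a m) 1 \<le> g * a m"
proof -
  define M where "M = int (a m)"
  define S where "S = ssum a {1..m}"
  define lo where "lo = (S - M) div 2"
  define T where "T = {lo<..lo + M}"
  define F where "F = (\<lambda>t. {I. I \<subseteq> {1..m} \<and> ssum a I = t})"
  have sub: "win a m (- (int 1 * int (a m))) (int 1 * int (a m)) \<subseteq> (\<Union>t\<in>T. F t)"
  proof
    fix I assume "I \<in> win a m (- (int 1 * int (a m))) (int 1 * int (a m))"
    hence I: "I \<subseteq> {1..m}" "- M < 2 * ssum a I - S" "2 * ssum a I - S \<le> M"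
      by (auto simp: win_def M_def S_def)
    have "ssum a I \<in> T" using I(2,3) unfolding T_def lo_def by auto
    thus "I \<in> (\<Union>t\<in>T. F t)" using I(1) by (auto simp: F_def)
  qed
  have fT: "finite T" by (simp add: T_def)
  have cT: "card T = a m" by (simp add: T_def M_def)
  have Fg: "card (F t) \<le> g" for t
    using D m1 unfolding D_set_def F_def ssum_def by auto
  have fU: "finite (\<Union>t\<in>T. F t)"
    by (rule finite_subset[of _ "Pow {1..m}"]) (auto simp: F_def)
  have "cnt a m (a m) 1 \<le> card (\<Union>t\<in>T. F t)"
    unfolding cnt_def by (rule card_mono[OF fU sub])
  also have "\<dots> \<le> (\<Sum>t\<in>T. card (F t))" by (rule card_UN_le[OF fT])
  also have "\<dots> \<le> card T * g" using Fg sum_bounded_above[of T "\<lambda>t. card (F t)" g] by simp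
  finally show ?thesis using cT by (simp add: mult.commute)
qed

theorem theorem4:
  fixes g m :: nat and a :: "nat \<Rightarrow> nat"
  assumes "g \<ge> 1" and "m \<ge> 1"
    and "strict_mono_on {1..m} a"
    and "\<forall>i\<in>{1..m}. a i > 0"
    and "D_set g a m"
  shows "real (a m) \<ge> (1 / real g) * real (m choose (m div 2)) - 1
         \<and> (m choose (m div 2)) \<le> g * (a m + 1)"
proof -
  have mono: "\<forall>i. 1 \<le> i \<longrightarrow> Suc i \<le> m \<longrightarrow> a i \<le> a (Suc i)"
  proof (intro allI impI)
    fix i assume "1 \<le> i" "Suc i \<le> m"
    hence "a i < a (Suc i)" using assms(3) by (intro strict_mono_onD[of "{1..m}" a]) auto
    thus "a i \<le> a (Suc i)" by simp
  qed
  have "m choose (m div 2) = cnt (\<lambda>_. 1) m 1 1" by (rule cnt_ones[symmetric])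
  also have "\<dots> \<le> cnt a m (a m) 1"
    by (rule cnt_main[OF mono assms(4)]) (use assms(2,4) in auto)
  also have "\<dots> \<le> g * a m" by (rule cnt_bound[OF assms(5,2)])
  finally have b: "m choose (m div 2) \<le> g * a m" .
  hence b2: "m choose (m div 2) \<le> g * (a m + 1)" by (simp add: algebra_simps)
  have g0: "real g > 0" using assms(1) by simp
  have "real (m choose (m div 2)) \<le> real g * real (a m + 1)" using b2
    by (metis of_nat_le_iff of_nat_mult)
  hence "real (m choose (m div 2)) / real g \<le> real (a m) + 1"
    using g0 by (simp add: divide_le_eq mult.commute add.commute)
  thus ?thesis using b2 by simp
qed

end
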